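(* Let $k$ be a natural number, $n=4k$, and let $|G\rangle$ be an $n$-qubit graph state whose graph has no isolated vertices. Let $\mathcal A$ be the set of stabilizers $S=(-1)^s\bigotimes_{i=1}^n\tau_i$ of $|G\rangle$ ($s\in\{0,1\}$) such that $\tau_i\in\{X,Y,Z\}$ for exactly $3k$ indices $i$ and $\tau_i=I$ for the remaining $k$ indices, and assume $\mathcal A\neq\emptyset$. Let $\rho=\mathcal E^{\otimes n}(|G\rangle\langle G|)$ with $\mathcal E$ the single-qubit depolarizing channel of error probability $p$. Then for every $S\in\mathcal A$, $F_{\rm est}:={\rm Tr}(\rho S)=(1-\tfrac43p)^{3k}$, and with $\tilde F:=(1-p)^{4k}$ (the fidelity $\langle G|\rho|G\rangle$ up to first order in $p$) one has $$0\le \tilde F-F_{\rm est}<\frac{2}{3k}\qquad\text{for all }0\le p\le 3/4.$$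
   Context: Graph state $|G\rangle=\big(\prod_{(i,j)\in E}CZ_{i,j}\big)|+\rangle^{\otimes n}$ with stabilizer generators $g_i=X_i\prod_{j:(i,j)\in E}Z_j$; a stabilizer is $S_\ell=\prod_i g_i^{\ell_i}$, $\ell\in\{0,1\}^n$, which equals $(-1)^s\bigotimes_{i=1}^n\tau_i$ with $\tau_i\in\{I,X,Y,Z\}$. The depolarizing channel is $\mathcal E(\cdot)=(1-p)(\cdot)+\frac p3[X(\cdot)X+Y(\cdot)Y+Z(\cdot)Z]$, applied independently to each qubit. *)

theory Defs
  imports Complex_Main "Jordan_Normal_Form.Matrix"
begin

datatype pauli = PI | PX | PY | PZ

definition pauli_mat :: "pauli \<Rightarrow> complex mat" where
  "pauli_mat P = (case P of
      PI \<Rightarrow> mat_of_rows_list 2 [[1, 0], [0, 1]]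
    | PX \<Rightarrow> mat_of_rows_list 2 [[0, 1], [1, 0]]
    | PY \<Rightarrow> mat_of_rows_list 2 [[0, -\<i>], [\<i>, 0]]
    | PZ \<Rightarrow> mat_of_rows_list 2 [[1, 0], [0, -1]])"

section \<open>n-qubit operators: computational basis index a < 2^n, bit i of a is qubit i\<close>

definition qbit :: "nat \<Rightarrow> nat \<Rightarrow> nat" where
  "qbit a i = (a div 2 ^ i) mod 2"

definition pauli_tensor :: "nat \<Rightarrow> (nat \<Rightarrow> pauli) \<Rightarrow> complex mat" where
  "pauli_tensor n tau = mat (2 ^ n) (2 ^ n)
     (\<lambda>(a, b). \<Prod>i<n. pauli_mat (tau i) $$ (qbit a i, qbit b i))"

definition pauli_at :: "nat \<Rightarrow> nat \<Rightarrow> pauli \<Rightarrow> complex mat" where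
  "pauli_at n i P = pauli_tensor n (\<lambda>j. if j = i then P else PI)"

definition simple_graph :: "nat \<Rightarrow> (nat \<Rightarrow> nat \<Rightarrow> bool) \<Rightarrow> bool" where
  "simple_graph n E \<longleftrightarrow> (\<forall>i j. E i j \<longrightarrow> i < n \<and> j < n) \<and> (\<forall>i j. E i j \<longrightarrow> E j i)
      \<and> (\<forall>i. \<not> E i i)"

definition no_isolated_vertices :: "nat \<Rightarrow> (nat \<Rightarrow> nat \<Rightarrow> bool) \<Rightarrow> bool" where
  "no_isolated_vertices n E \<longleftrightarrow> (\<forall>i<n. \<exists>j<n. E i j)"

definition cz :: "nat \<Rightarrow> nat \<Rightarrow> nat \<Rightarrow> complex mat" where
  "cz n i j = mat (2 ^ n) (2 ^ n)
     (\<lambda>(a, b). if a = b then (if qbit a i = 1 \<and> qbit a j = 1 then -1 else 1) else 0)"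

definition plus_state :: "nat \<Rightarrow> complex vec" where
  "plus_state n = vec (2 ^ n) (\<lambda>_. complex_of_real (1 / sqrt (2 ^ n)))"

definition graph_edges :: "nat \<Rightarrow> (nat \<Rightarrow> nat \<Rightarrow> bool) \<Rightarrow> (nat \<times> nat) list" where
  "graph_edges n E = [(i, j). j \<leftarrow> [0..<n], i \<leftarrow> [0..<j], E i j]"

definition graph_state :: "nat \<Rightarrow> (nat \<Rightarrow> nat \<Rightarrow> bool) \<Rightarrow> complex vec" where
  "graph_state n E = foldr (\<lambda>(i, j) v. cz n i j *\<^sub>v v) (graph_edges n E) (plus_state n)"

definition graph_density :: "nat \<Rightarrow> (nat \<Rightarrow> nat \<Rightarrow> bool) \<Rightarrow> complex mat" where
  "graph_density n E = (let psi = graph_state n E in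
     mat (2 ^ n) (2 ^ n) (\<lambda>(a, b). psi $ a * cnj (psi $ b)))"

definition stab_gen :: "nat \<Rightarrow> (nat \<Rightarrow> nat \<Rightarrow> bool) \<Rightarrow> nat \<Rightarrow> complex mat" where
  "stab_gen n E i = pauli_tensor n (\<lambda>j. if j = i then PX else if E i j then PZ else PI)"

definition stabilizer :: "nat \<Rightarrow> (nat \<Rightarrow> nat \<Rightarrow> bool) \<Rightarrow> (nat \<Rightarrow> bool) \<Rightarrow> complex mat" where
  "stabilizer n E l = foldr (\<lambda>i M. (if l i then stab_gen n E i else 1\<^sub>m (2 ^ n)) * M)
      [0..<n] (1\<^sub>m (2 ^ n))"

definition weight_stabilizers :: "nat \<Rightarrow> (nat \<Rightarrow> nat \<Rightarrow> bool) \<Rightarrow> nat \<Rightarrow> complex mat set" where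
  "weight_stabilizers n E w = {S. (\<exists>l. S = stabilizer n E l) \<and>
      (\<exists>(s::nat) tau. s \<le> 1 \<and> S = ((-1) ^ s) \<cdot>\<^sub>m pauli_tensor n tau
         \<and> card {i. i < n \<and> tau i \<noteq> PI} = w)}"

definition mat_trace :: "complex mat \<Rightarrow> complex" where
  "mat_trace A = (\<Sum>i<dim_row A. A $$ (i, i))"

definition depol_qubit :: "nat \<Rightarrow> real \<Rightarrow> nat \<Rightarrow> complex mat \<Rightarrow> complex mat" where
  "depol_qubit n p i M =
     complex_of_real (1 - p) \<cdot>\<^sub>m M
     + complex_of_real (p / 3) \<cdot>\<^sub>m
        (pauli_at n i PX * M * pauli_at n i PX
         + pauli_at n i PY * M * pauli_at n i PY
         + pauli_at n i PZ * M * pauli_at n i PZ)"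

definition depol_all :: "nat \<Rightarrow> real \<Rightarrow> complex mat \<Rightarrow> complex mat" where
  "depol_all n p M = foldr (depol_qubit n p) [0..<n] M"

end

theory Submission
  imports Defs
begin


lemma qbit_bit: "qbit a i = (if bit a i then 1 else 0)"
  unfolding qbit_def by (simp add: bit_iff_odd odd_iff_mod_2_eq_one)

lemma qbit_less2[simp]: "qbit a i < 2"
  unfolding qbit_def by simp

lemma qbit_add_pow:
  assumes "d < 2^n" shows "qbit (d + 2^n) i = (if i = n then 1 else if i < n then qbit d i else 0)"
proof -
  consider "i < n" | "i = n" | "i > n" by linarith
  then show ?thesis
  proof cases
    case 1
    have "(d + 2^n) div 2^i = d div 2^i + 2^(n-i)"
    proof -
      have "(2::nat)^n = 2^i * 2^(n-i)" using 1 by (simp flip: power_add)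
      then show ?thesis by simp
    qed
    moreover have "even ((2::nat)^(n-i))" using 1 by simp
    ultimately show ?thesis using 1 unfolding qbit_def by (simp add: mod_add_eq[symmetric])
  next
    case 2 then show ?thesis using assms unfolding qbit_def by simp
  next
    case 3
    have "d + 2^n < 2^i"
    proof -
      have "(2::nat)^i \<ge> 2^(Suc n)" using 3 by (intro power_increasing) auto
      then show ?thesis using assms by simp
    qed
    then show ?thesis using 3 unfolding qbit_def by simp
  qed
qed

lemma qbit_small: assumes "d < 2^n" "i \<ge> n" shows "qbit d i = 0"
proof -
  have "d < 2^i" using assms by (meson order_less_le_trans one_le_numeral power_increasing)
  then show ?thesis unfolding qbit_def by simp
qed

lemma sum_bits:
  fixes h :: "nat \<Rightarrow> nat \<Rightarrow> 'a::comm_semiring_1"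
  shows "(\<Sum>c<2^n. \<Prod>i<n. h i (qbit c i)) = (\<Prod>i<n. h i 0 + h i 1)"
proof (induction n)
  case 0 then show ?case by simp
next
  case (Suc n)
  have split: "{..<2^Suc n} = {..<(2::nat)^n} \<union> (\<lambda>d. d + 2^n) ` {..<2^n}" 
  proof -
    have "x \<in> (\<lambda>d. d + 2^n) ` {..<2^n}" if "2^n \<le> x" "x < 2^Suc n" for x :: nat
      using that by (intro image_eqI[of _ _ "x - 2^n"]) auto
    then show ?thesis by (auto simp: not_less) (meson not_less)
  qed
  have disj: "{..<(2::nat)^n} \<inter> (\<lambda>d. d + 2^n) ` {..<2^n} = {}" by auto
  have "(\<Sum>c<2^Suc n. \<Prod>i<Suc n. h i (qbit c i))
     = (\<Sum>c<2^n. \<Prod>i<Suc n. h i (qbit c i)) + (\<Sum>c\<in>(\<lambda>d. d + 2^n) ` {..<2^n}. \<Prod>i<Suc n. h i (qbit c i))"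
    unfolding split by (rule sum.union_disjoint) (use disj in auto)
  also have "(\<Sum>c\<in>(\<lambda>d. d + 2^n) ` {..<2^n}. \<Prod>i<Suc n. h i (qbit c i))
      = (\<Sum>d<2^n. \<Prod>i<Suc n. h i (qbit (d + 2^n) i))"
    by (subst sum.reindex) (auto simp: inj_on_def)
  also have "\<dots> = (\<Sum>d<2^n. (\<Prod>i<n. h i (qbit d i)) * h n 1)"
    by (intro sum.cong refl) (auto simp: qbit_add_pow intro!: prod.cong)
  also have "(\<Sum>c<2^n. \<Prod>i<Suc n. h i (qbit c i)) = (\<Sum>c<2^n. (\<Prod>i<n. h i (qbit c i)) * h n 0)"
    by (intro sum.cong refl) (auto simp: qbit_small)
  finally show ?case using Suc by (simp add: sum_distrib_right[symmetric] distrib_left)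
qed


definition tens :: "nat \<Rightarrow> (nat \<Rightarrow> complex mat) \<Rightarrow> complex mat" where
  "tens n F = mat (2 ^ n) (2 ^ n) (\<lambda>(a, b). \<Prod>i<n. F i $$ (qbit a i, qbit b i))"

lemma tens_carrier[simp]: "tens n F \<in> carrier_mat (2^n) (2^n)"
  and tens_dim[simp]: "dim_row (tens n F) = 2^n" "dim_col (tens n F) = 2^n"
  by (auto simp: tens_def)

lemma tens_index[simp]: "a < 2^n \<Longrightarrow> b < 2^n \<Longrightarrow> tens n F $$ (a,b) = (\<Prod>i<n. F i $$ (qbit a i, qbit b i))"
  by (simp add: tens_def)

lemma pauli_tensor_tens: "pauli_tensor n tau = tens n (\<lambda>i. pauli_mat (tau i))"
  by (simp add: pauli_tensor_def tens_def)

lemma tens_mult: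
  assumes "\<And>i. i < n \<Longrightarrow> F i \<in> carrier_mat 2 2" "\<And>i. i < n \<Longrightarrow> G i \<in> carrier_mat 2 2"
  shows "tens n F * tens n G = tens n (\<lambda>i. F i * G i)"
proof (rule eq_matI)
  fix a b assume ab: "a < dim_row (tens n (\<lambda>i. F i * G i))" "b < dim_col (tens n (\<lambda>i. F i * G i))"
  then have a: "a < 2^n" and b: "b < 2^n" by auto
  have "(tens n F * tens n G) $$ (a,b) = (\<Sum>c<2^n. tens n F $$ (a,c) * tens n G $$ (c,b))"
    using a b by (simp add: scalar_prod_def lessThan_atLeast0)
  also have "\<dots> = (\<Sum>c<2^n. \<Prod>i<n. F i $$ (qbit a i, qbit c i) * G i $$ (qbit c i, qbit b i))"
    using a b by (intro sum.cong refl) (simp add: prod.distrib)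
  also have "\<dots> = (\<Prod>i<n. F i $$ (qbit a i, 0) * G i $$ (0, qbit b i) + F i $$ (qbit a i, 1) * G i $$ (1, qbit b i))"
    by (rule sum_bits[where h = "\<lambda>i x. F i $$ (qbit a i, x) * G i $$ (x, qbit b i)"])
  also have "\<dots> = (\<Prod>i<n. (F i * G i) $$ (qbit a i, qbit b i))"
  proof (intro prod.cong refl)
    fix i assume "i \<in> {..<n}"
    then have c: "F i \<in> carrier_mat 2 2" "G i \<in> carrier_mat 2 2" using assms by auto
    have q: "qbit a i < 2" "qbit b i < 2" by auto
    have "(F i * G i) $$ (qbit a i, qbit b i) = (\<Sum>x\<in>{0..<2}. F i $$ (qbit a i, x) * G i $$ (x, qbit b i))"
      using c q by (simp add: scalar_prod_def)
    also have "\<dots> = F i $$ (qbit a i, 0) * G i $$ (0, qbit b i) + F i $$ (qbit a i, 1) * G i $$ (1, qbit b i)"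
      by (simp add: numeral_2_eq_2)
    finally show "F i $$ (qbit a i, 0) * G i $$ (0, qbit b i) + F i $$ (qbit a i, 1) * G i $$ (1, qbit b i) = (F i * G i) $$ (qbit a i, qbit b i)" by simp
  qed
  finally show "(tens n F * tens n G) $$ (a,b) = tens n (\<lambda>i. F i * G i) $$ (a,b)" using a b by simp
qed auto

lemma tens_scale:
  assumes "i < n" "M \<in> carrier_mat 2 2"
  shows "tens n (\<lambda>j. if j = i then c \<cdot>\<^sub>m M else F j) = c \<cdot>\<^sub>m tens n (\<lambda>j. if j = i then M else F j)"
proof (rule eq_matI)
  fix a b assume "a < dim_row (c \<cdot>\<^sub>m tens n (\<lambda>j. if j = i then M else F j))" "b < dim_col (c \<cdot>\<^sub>m tens n (\<lambda>j. if j = i then M else F j))"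
  then have a: "a < 2^n" and b: "b < 2^n" by auto
  have "(\<Prod>j<n. (if j = i then c \<cdot>\<^sub>m M else F j) $$ (qbit a j, qbit b j))
     = (\<Prod>j<n. (if j = i then c else 1) * ((if j = i then M else F j) $$ (qbit a j, qbit b j)))"
    using assms(2) by (intro prod.cong refl) auto
  then show "tens n (\<lambda>j. if j = i then c \<cdot>\<^sub>m M else F j) $$ (a,b) = (c \<cdot>\<^sub>m tens n (\<lambda>j. if j = i then M else F j)) $$ (a,b)"
    using a b assms by (simp add: prod.distrib prod.delta)
qed auto


lemma pauli_carrier[simp]: "pauli_mat P \<in> carrier_mat 2 2"
  by (cases P) (auto simp: pauli_mat_def mat_of_rows_list_def)

definition sg :: "pauli \<Rightarrow> pauli \<Rightarrow> complex" where
  "sg P Q = (if P = PI \<or> Q = PI \<or> P = Q then 1 else -1)"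

lemma less2_cases: "(i::nat) < 2 \<Longrightarrow> i = 0 \<or> i = 1" by auto

lemma pauli_conj: "pauli_mat P * pauli_mat Q * pauli_mat P = sg P Q \<cdot>\<^sub>m pauli_mat Q"
proof (rule eq_matI)
  fix i j assume "i < dim_row (sg P Q \<cdot>\<^sub>m pauli_mat Q)" "j < dim_col (sg P Q \<cdot>\<^sub>m pauli_mat Q)"
  then have "i = 0 \<or> i = 1" "j = 0 \<or> j = 1" using pauli_carrier[of Q] by auto
  then show "(pauli_mat P * pauli_mat Q * pauli_mat P) $$ (i, j) = (sg P Q \<cdot>\<^sub>m pauli_mat Q) $$ (i, j)"
    by (cases P; cases Q) (auto simp: pauli_mat_def mat_of_rows_list_def scalar_prod_def sg_def numeral_2_eq_2)
qed (simp_all add: carrier_matD[OF pauli_carrier])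

lemma pauli_at_tens: "pauli_at n i P = tens n (\<lambda>j. pauli_mat (if j = i then P else PI))"
  by (simp add: pauli_at_def pauli_tensor_tens)

lemma conj_tens:
  assumes "i < n"
  shows "pauli_at n i P * tens n (\<lambda>j. pauli_mat (tau j)) * pauli_at n i P = sg P (tau i) \<cdot>\<^sub>m tens n (\<lambda>j. pauli_mat (tau j))"
proof -
  have "pauli_at n i P * tens n (\<lambda>j. pauli_mat (tau j)) * pauli_at n i P
     = tens n (\<lambda>j. pauli_mat (if j = i then P else PI) * pauli_mat (tau j) * pauli_mat (if j = i then P else PI))"
    unfolding pauli_at_tens by (simp add: tens_mult mult_carrier_mat[OF pauli_carrier pauli_carrier])
  also have "\<dots> = tens n (\<lambda>j. if j = i then sg P (tau i) \<cdot>\<^sub>m pauli_mat (tau i) else pauli_mat (tau j))"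
    by (intro arg_cong[where f="tens n"] ext) (auto simp: pauli_conj sg_def)
  also have "\<dots> = sg P (tau i) \<cdot>\<^sub>m tens n (\<lambda>j. if j = i then pauli_mat (tau i) else pauli_mat (tau j))"
    using assms by (simp add: tens_scale)
  also have "(\<lambda>j. if j = i then pauli_mat (tau i) else pauli_mat (tau j)) = (\<lambda>j. pauli_mat (tau j))" by auto
  finally show ?thesis .
qed


lemma mat_trace_comm:
  assumes "A \<in> carrier_mat m k" "B \<in> carrier_mat k m"
  shows "mat_trace (A * B) = mat_trace (B * A)"
proof -
  have "mat_trace (A * B) = (\<Sum>i<m. \<Sum>j<k. A $$ (i,j) * B $$ (j,i))"
    using assms by (simp add: mat_trace_def scalar_prod_def lessThan_atLeast0)
  also have "\<dots> = (\<Sum>j<k. \<Sum>i<m. B $$ (j,i) * A $$ (i,j))"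
    by (subst sum.swap) (simp add: mult.commute)
  also have "\<dots> = mat_trace (B * A)"
    using assms by (simp add: mat_trace_def scalar_prod_def lessThan_atLeast0)
  finally show ?thesis .
qed

lemma mat_trace_add:
  assumes "A \<in> carrier_mat m m" "B \<in> carrier_mat m m"
  shows "mat_trace (A + B) = mat_trace A + mat_trace B"
  using assms by (simp add: mat_trace_def sum.distrib)

lemma mat_trace_smult: "A \<in> carrier_mat m m \<Longrightarrow> mat_trace (c \<cdot>\<^sub>m A) = c * mat_trace A"
  by (simp add: mat_trace_def sum_distrib_left)

lemma sq_mult[simp]: "A \<in> carrier_mat k k \<Longrightarrow> B \<in> carrier_mat k k \<Longrightarrow> A * B \<in> carrier_mat k k"
  by (rule mult_carrier_mat)

lemma sq_assoc: "A \<in> carrier_mat k k \<Longrightarrow> B \<in> carrier_mat k k \<Longrightarrow> C \<in> carrier_mat k k \<Longrightarrow> A * B * C = A * (B * C)"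
  by (rule assoc_mult_mat)

lemma pauli_at_carrier[simp]: "pauli_at n i P \<in> carrier_mat (2^n) (2^n)"
  by (simp add: pauli_at_tens)

lemma trace_conj:
  fixes tau :: "nat \<Rightarrow> pauli"
  assumes "i < n" "M \<in> carrier_mat (2^n) (2^n)"
  defines "T \<equiv> tens n (\<lambda>j. pauli_mat (tau j))"
  shows "mat_trace (pauli_at n i P * M * pauli_at n i P * T) = sg P (tau i) * mat_trace (M * T)"
proof -
  let ?P = "pauli_at n i P"
  have T: "T \<in> carrier_mat (2^n) (2^n)" unfolding T_def by simp
  have P: "?P \<in> carrier_mat (2^n) (2^n)" by simp
  note M = assms(2)
  have "?P * M * ?P * T = (?P * M) * (?P * T)"
    using M T P by (simp add: sq_assoc[of _ "2^n"])
  then have "mat_trace (?P * M * ?P * T) = mat_trace ((?P * M) * (?P * T))" by simp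
  also have "\<dots> = mat_trace ((?P * T) * (?P * M))"
    by (rule mat_trace_comm[of _ "2^n" "2^n"]) (use M T P in \<open>simp_all del: pauli_at_carrier\<close>)
  also have "(?P * T) * (?P * M) = ((?P * T) * ?P) * M"
    using M T P by (simp add: sq_assoc[of _ "2^n"])
  also have "(?P * T) * ?P = sg P (tau i) \<cdot>\<^sub>m T"
    unfolding T_def using conj_tens[OF assms(1)] by simp
  also have "mat_trace ((sg P (tau i) \<cdot>\<^sub>m T) * M) = sg P (tau i) * mat_trace (T * M)"
    using M T by (simp add: mult_smult_assoc_mat[of _ "2^n" "2^n"] mat_trace_smult[of _ "2^n"])
  also have "mat_trace (T * M) = mat_trace (M * T)"
    by (rule mat_trace_comm) (use M T in auto)
  finally show ?thesis .
qed

definition cfac :: "real \<Rightarrow> pauli \<Rightarrow> complex" where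
  "cfac p Q = (if Q = PI then 1 else complex_of_real (1 - 4/3 * p))"

lemma depol_carrier[simp]: "M \<in> carrier_mat (2^n) (2^n) \<Longrightarrow> depol_qubit n p i M \<in> carrier_mat (2^n) (2^n)"
  unfolding depol_qubit_def
  by (intro add_carrier_mat smult_carrier_mat sq_mult pauli_at_carrier) auto

lemma trace_depol:
  fixes tau :: "nat \<Rightarrow> pauli"
  assumes "i < n" "M \<in> carrier_mat (2^n) (2^n)"
  defines "T \<equiv> tens n (\<lambda>j. pauli_mat (tau j))"
  shows "mat_trace (depol_qubit n p i M * T) = cfac p (tau i) * mat_trace (M * T)"
proof -
  have T: "T \<in> carrier_mat (2^n) (2^n)" unfolding T_def by simp
  define A where "A Q = pauli_at n i Q * M * pauli_at n i Q" for Q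
  have A: "A Q \<in> carrier_mat (2^n) (2^n)" for Q
    unfolding A_def using assms(2) by (intro sq_mult) auto
  have tA: "mat_trace (A Q * T) = sg Q (tau i) * mat_trace (M * T)" for Q
    unfolding A_def T_def using trace_conj[OF assms(1,2)] by simp
  have "depol_qubit n p i M * T = complex_of_real (1 - p) \<cdot>\<^sub>m (M * T) + complex_of_real (p / 3) \<cdot>\<^sub>m (A PX * T + A PY * T + A PZ * T)"
    unfolding depol_qubit_def A_def[symmetric] using A assms(2) T
    by (simp add: add_mult_distrib_mat[of _ "2^n" "2^n"] mult_smult_assoc_mat[of _ "2^n" "2^n"])
  then have "mat_trace (depol_qubit n p i M * T) = complex_of_real (1 - p) * mat_trace (M * T) + complex_of_real (p / 3) * (mat_trace (A PX * T) + mat_trace (A PY * T) + mat_trace (A PZ * T))"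
    using A assms(2) T
    by (simp add: mat_trace_add[of _ "2^n"] mat_trace_smult[of _ "2^n"] add_carrier_mat)
  also have "\<dots> = cfac p (tau i) * mat_trace (M * T)"
    unfolding tA by (cases "tau i") (auto simp: sg_def cfac_def algebra_simps)
  finally show ?thesis .
qed


lemma foldr_depol_carrier: "M \<in> carrier_mat (2^n) (2^n) \<Longrightarrow> foldr (depol_qubit n p) xs M \<in> carrier_mat (2^n) (2^n)"
  by (induction xs) auto

lemma trace_depol_list:
  fixes tau :: "nat \<Rightarrow> pauli"
  assumes "set xs \<subseteq> {..<n}" "M \<in> carrier_mat (2^n) (2^n)"
  shows "mat_trace (foldr (depol_qubit n p) xs M * tens n (\<lambda>j. pauli_mat (tau j)))
     = (\<Prod>x\<leftarrow>xs. cfac p (tau x)) * mat_trace (M * tens n (\<lambda>j. pauli_mat (tau j)))"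
  using assms(1)
proof (induction xs)
  case Nil then show ?case by simp
next
  case (Cons x xs)
  then show ?case
    using trace_depol[of x n "foldr (depol_qubit n p) xs M" p tau] foldr_depol_carrier[OF assms(2)]
    by simp
qed

lemma trace_depol_all:
  fixes tau :: "nat \<Rightarrow> pauli"
  assumes "M \<in> carrier_mat (2^n) (2^n)"
  shows "mat_trace (depol_all n p M * tens n (\<lambda>j. pauli_mat (tau j)))
     = complex_of_real ((1 - 4/3*p) ^ card {i. i < n \<and> tau i \<noteq> PI}) * mat_trace (M * tens n (\<lambda>j. pauli_mat (tau j)))"
proof -
  have "(\<Prod>x\<leftarrow>[0..<n]. cfac p (tau x)) = (\<Prod>x\<in>{..<n}. cfac p (tau x))"
    by (simp add: prod.distinct_set_conv_list[symmetric] lessThan_atLeast0)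
  also have "\<dots> = (\<Prod>x\<in>{..<n} \<inter> {x. tau x \<noteq> PI}. complex_of_real (1 - 4/3*p))"
  proof -
    have "- {x. tau x = PI} = {x. tau x \<noteq> PI}" by auto
    then show ?thesis unfolding cfac_def by (simp add: prod.If_cases)
  qed
  also have "\<dots> = complex_of_real ((1 - 4/3*p) ^ card {i. i < n \<and> tau i \<noteq> PI})"
  proof -
    have "{..<n} \<inter> {x. tau x \<noteq> PI} = {i. i < n \<and> tau i \<noteq> PI}" by auto
    then show ?thesis by simp
  qed
  finally show ?thesis
    unfolding depol_all_def using trace_depol_list[of "[0..<n]" n M p tau] assms by (simp add: lessThan_atLeast0)
qed


definition sgn2 :: "nat \<Rightarrow> nat \<Rightarrow> nat \<Rightarrow> complex" where
  "sgn2 a i j = (if qbit a i = 1 \<and> qbit a j = 1 then -1 else 1)"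

lemma cz_dim[simp]: "dim_row (cz n i j) = 2^n" "dim_col (cz n i j) = 2^n" by (simp_all add: cz_def)

lemma concat_if_single: "concat (map (\<lambda>i. if P i then [f i] else []) xs) = map f (filter P xs)"
  by (induction xs) auto

lemma cz_mult:
  assumes "v \<in> carrier_vec (2^n)" "a < 2^n"
  shows "(cz n i j *\<^sub>v v) $ a = sgn2 a i j * v $ a"
proof -
  have "(cz n i j *\<^sub>v v) $ a = (\<Sum>b\<in>{0..<2^n}. cz n i j $$ (a,b) * v$b)"
    using assms by (auto simp: scalar_prod_def intro!: sum.cong)
  also have "\<dots> = (\<Sum>b\<in>{0..<2^n}. (if b = a then sgn2 a i j * v $ b else 0))"
    using assms(2) by (intro sum.cong refl) (auto simp: cz_def sgn2_def)
  also have "\<dots> = sgn2 a i j * v $ a" using assms(2) by (simp add: sum.delta)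
  finally show ?thesis .
qed

lemma cz_carrier[simp]: "cz n i j \<in> carrier_mat (2^n) (2^n)" by (simp add: cz_def)

definition cst :: "nat \<Rightarrow> complex" where "cst n = complex_of_real (1 / sqrt (2 ^ n))"

lemma foldr_cz:
  "foldr (\<lambda>(i, j) v. cz n i j *\<^sub>v v) es (plus_state n) \<in> carrier_vec (2^n) \<and>
   (\<forall>a < 2^n. foldr (\<lambda>(i, j) v. cz n i j *\<^sub>v v) es (plus_state n) $ a = cst n * prod_list (map (\<lambda>(i,j). sgn2 a i j) es))"
proof (induction es)
  case Nil then show ?case by (simp add: plus_state_def cst_def)
next
  case (Cons e es)
  obtain i j where e: "e = (i,j)" by force
  let ?v = "foldr (\<lambda>(i, j) v. cz n i j *\<^sub>v v) es (plus_state n)"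
  have v: "?v \<in> carrier_vec (2^n)" using Cons by blast
  have "\<forall>a<2^n. (cz n i j *\<^sub>v ?v) $ a = cst n * (sgn2 a i j * prod_list (map (\<lambda>(i,j). sgn2 a i j) es))"
    using Cons cz_mult[OF v] by (simp add: mult_ac del: index_mult_mat_vec)
  then show ?case using v by (simp add: e mult_mat_vec_carrier[OF cz_carrier] del: index_mult_mat_vec)
qed

lemma distinct_graph_edges: "distinct (graph_edges n E)"
  unfolding graph_edges_def
proof (induction n)
  case 0 then show ?case by simp
next
  case (Suc n)
  have eq: "[(i, j). j \<leftarrow> [0..<Suc n], i \<leftarrow> [0..<j], E i j] = [(i, j). j \<leftarrow> [0..<n], i \<leftarrow> [0..<j], E i j] @ map (\<lambda>i. (i, n)) (filter (\<lambda>i. E i n) [0..<n])"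
    by (simp add: concat_if_single)
  show ?case unfolding eq using Suc by (auto simp: distinct_map inj_on_def)
qed

lemma set_graph_edges: "set (graph_edges n E) = {(u,w). u < w \<and> w < n \<and> E u w}"
  unfolding graph_edges_def by auto

lemma graph_state_carrier: "graph_state n E \<in> carrier_vec (2^n)"
  unfolding graph_state_def using foldr_cz by blast

lemma graph_state_index:
  assumes "a < 2^n"
  shows "graph_state n E $ a = cst n * (\<Prod>e\<in>{(u,w). u < w \<and> w < n \<and> E u w}. sgn2 a (fst e) (snd e))"
proof -
  have "graph_state n E $ a = cst n * prod_list (map (\<lambda>(i,j). sgn2 a i j) (graph_edges n E))"
    unfolding graph_state_def using foldr_cz assms by blast
  also have "prod_list (map (\<lambda>(i,j). sgn2 a i j) (graph_edges n E)) = (\<Prod>e\<in>set (graph_edges n E). sgn2 a (fst e) (snd e))"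
    by (subst prod.distinct_set_conv_list[OF distinct_graph_edges]) (simp add: case_prod_beta')
  finally show ?thesis by (simp add: set_graph_edges)
qed


lemma qbit_flip: "qbit (flip_bit i (a::nat)) j = (if j = i then 1 - qbit a i else qbit a j)"
  by (simp add: qbit_bit bit_flip_bit_iff)

lemma flip_less: assumes "i < n" "(a::nat) < 2^n" shows "flip_bit i a < 2^n"
proof -
  have "take_bit n a = a" using assms(2) by (simp add: take_bit_nat_eq_self_iff)
  then have "take_bit n (flip_bit i a) = flip_bit i a" using assms(1) by (simp add: take_bit_flip_bit_eq)
  then show ?thesis by (simp add: take_bit_nat_eq_self_iff)
qed

lemma bits_eq:
  assumes "(a::nat) < 2^n" "b < 2^n" "\<And>j. j < n \<Longrightarrow> qbit a j = qbit b j"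
  shows "a = b"
proof (rule bit_eqI)
  fix j
  show "bit a j = bit b j"
  proof (cases "j < n")
    case True then show ?thesis using assms(3)[of j] by (auto simp: qbit_bit split: if_splits)
  next
    case False then show ?thesis using qbit_small[OF assms(1), of j] qbit_small[OF assms(2), of j]
      by (auto simp: qbit_bit split: if_splits)
  qed
qed

definition zz :: "nat \<Rightarrow> nat \<Rightarrow> complex" where "zz a j = (if qbit a j = 1 then -1 else 1)"

lemma qbit_cases: "qbit a i = 0 \<or> qbit a i = 1"
  using qbit_less2[of a i] by linarith

lemma sgn2_flip:
  assumes "u \<noteq> w"
  shows "sgn2 (flip_bit i a) u w = sgn2 a u w * (if u = i then zz a w else 1) * (if w = i then zz a u else 1)"
  using assms qbit_cases[of a u] qbit_cases[of a w] qbit_cases[of a i]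
  by (auto simp: sgn2_def zz_def qbit_flip)

lemma sigma_flip:
  assumes "simple_graph n E" "i < n"
  shows "(\<Prod>e\<in>{(u,w). u < w \<and> w < n \<and> E u w}. sgn2 (flip_bit i a) (fst e) (snd e))
       = (\<Prod>e\<in>{(u,w). u < w \<and> w < n \<and> E u w}. sgn2 a (fst e) (snd e)) * (\<Prod>j\<in>{j. j < n \<and> E i j}. zz a j)"
proof -
  let ?Ed = "{(u,w). u < w \<and> w < n \<and> E u w}"
  have fin: "finite ?Ed" by (rule finite_subset[of _ "{..<n} \<times> {..<n}"]) auto
  have "(\<Prod>e\<in>?Ed. sgn2 (flip_bit i a) (fst e) (snd e))
     = (\<Prod>e\<in>?Ed. sgn2 a (fst e) (snd e) * (if fst e = i then zz a (snd e) else 1) * (if snd e = i then zz a (fst e) else 1))"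
    by (intro prod.cong refl) (auto simp: sgn2_flip)
  also have "\<dots> = (\<Prod>e\<in>?Ed. sgn2 a (fst e) (snd e)) * (\<Prod>e\<in>?Ed. if fst e = i then zz a (snd e) else 1) * (\<Prod>e\<in>?Ed. if snd e = i then zz a (fst e) else 1)"
    by (simp add: prod.distrib)
  also have "(\<Prod>e\<in>?Ed. if fst e = i then zz a (snd e) else 1) = (\<Prod>w\<in>{w. i < w \<and> w < n \<and> E i w}. zz a w)"
  proof -
    have "(\<Prod>e\<in>?Ed. if fst e = i then zz a (snd e) else 1) = (\<Prod>e\<in>?Ed \<inter> {e. fst e = i}. zz a (snd e))"
      using fin by (simp add: prod.If_cases)
    also have "?Ed \<inter> {e. fst e = i} = (\<lambda>w. (i,w)) ` {w. i < w \<and> w < n \<and> E i w}" by auto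
    also have "(\<Prod>e\<in>(\<lambda>w. (i,w)) ` {w. i < w \<and> w < n \<and> E i w}. zz a (snd e)) = (\<Prod>w\<in>{w. i < w \<and> w < n \<and> E i w}. zz a w)"
      by (subst prod.reindex) (auto simp: inj_on_def)
    finally show ?thesis .
  qed
  also have "(\<Prod>e\<in>?Ed. if snd e = i then zz a (fst e) else 1) = (\<Prod>u\<in>{u. u < i \<and> E i u}. zz a u)"
  proof -
    have "(\<Prod>e\<in>?Ed. if snd e = i then zz a (fst e) else 1) = (\<Prod>e\<in>?Ed \<inter> {e. snd e = i}. zz a (fst e))"
      using fin by (simp add: prod.If_cases)
    also have "?Ed \<inter> {e. snd e = i} = (\<lambda>u. (u,i)) ` {u. u < i \<and> E i u}"
      using assms unfolding simple_graph_def by auto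
    also have "(\<Prod>e\<in>(\<lambda>u. (u,i)) ` {u. u < i \<and> E i u}. zz a (fst e)) = (\<Prod>u\<in>{u. u < i \<and> E i u}. zz a u)"
      by (subst prod.reindex) (auto simp: inj_on_def)
    finally show ?thesis .
  qed
  finally have main: "(\<Prod>e\<in>?Ed. sgn2 (flip_bit i a) (fst e) (snd e)) = (\<Prod>e\<in>?Ed. sgn2 a (fst e) (snd e)) * (\<Prod>w\<in>{w. i < w \<and> w < n \<and> E i w}. zz a w) * (\<Prod>u\<in>{u. u < i \<and> E i u}. zz a u)" .
  have "(\<Prod>w\<in>{w. i < w \<and> w < n \<and> E i w}. zz a w) * (\<Prod>u\<in>{u. u < i \<and> E i u}. zz a u) = (\<Prod>j\<in>{j. j < n \<and> E i j}. zz a j)"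
  proof -
    have "{j. j < n \<and> E i j} = {w. i < w \<and> w < n \<and> E i w} \<union> {u. u < i \<and> E i u}"
    proof -
      have "E i j \<Longrightarrow> j \<noteq> i" for j using assms unfolding simple_graph_def by blast
      moreover have "E i j \<Longrightarrow> j < n" for j using assms unfolding simple_graph_def by blast
      ultimately show ?thesis using assms(2) by (auto simp: nat_neq_iff)
    qed
    moreover have "prod (zz a) ({w. i < w \<and> w < n \<and> E i w} \<union> {u. u < i \<and> E i u}) = prod (zz a) {w. i < w \<and> w < n \<and> E i w} * prod (zz a) {u. u < i \<and> E i u}"
      by (rule prod.union_disjoint) auto
    ultimately show ?thesis by simp
  qed
  with main show ?thesis by (simp add: mult.assoc)
qed


lemma pX: "x < 2 \<Longrightarrow> y < 2 \<Longrightarrow> pauli_mat PX $$ (x,y) = (if x = y then 0 else 1)"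
  by (drule less2_cases, drule less2_cases) (auto simp: pauli_mat_def mat_of_rows_list_def)
lemma pZ: "x < 2 \<Longrightarrow> y < 2 \<Longrightarrow> pauli_mat PZ $$ (x,y) = (if x \<noteq> y then 0 else if x = 0 then 1 else -1)"
  by (drule less2_cases, drule less2_cases) (auto simp: pauli_mat_def mat_of_rows_list_def)
lemma pI: "x < 2 \<Longrightarrow> y < 2 \<Longrightarrow> pauli_mat PI $$ (x,y) = (if x = y then 1 else 0)"
  by (drule less2_cases, drule less2_cases) (auto simp: pauli_mat_def mat_of_rows_list_def)

lemma stab_gen_tens: "stab_gen n E i = tens n (\<lambda>j. pauli_mat (if j = i then PX else if E i j then PZ else PI))"
  by (simp add: stab_gen_def pauli_tensor_tens)

lemma stab_gen_carrier[simp]: "stab_gen n E i \<in> carrier_mat (2^n) (2^n)"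
  by (simp add: stab_gen_tens)

lemma stab_gen_dim[simp]: "dim_row (stab_gen n E i) = 2^n" "dim_col (stab_gen n E i) = 2^n"
  by (simp_all add: stab_gen_tens)

lemma gen_entry_zero:
  assumes "i < n" "a < 2^n" "b < 2^n" "b \<noteq> flip_bit i a"
  shows "stab_gen n E i $$ (a,b) = 0"
proof -
  let ?F = "\<lambda>j. pauli_mat (if j = i then PX else if E i j then PZ else PI)"
  have "\<exists>j<n. ?F j $$ (qbit a j, qbit b j) = 0"
  proof (rule ccontr)
    assume "\<not> ?thesis"
    then have nz: "\<And>j. j < n \<Longrightarrow> ?F j $$ (qbit a j, qbit b j) \<noteq> 0" by blast
    have "qbit b j = qbit (flip_bit i a) j" if "j < n" for j
    proof (cases "j = i")
      case True
      then have "qbit a j \<noteq> qbit b j" using nz[OF that] by (auto simp: pX)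
      then show ?thesis using True qbit_cases[of a i] qbit_cases[of b i] by (auto simp: qbit_flip)
    next
      case False
      then have "qbit a j = qbit b j" using nz[OF that] by (auto simp: pZ pI split: if_splits)
      then show ?thesis using False by (simp add: qbit_flip)
    qed
    then have "b = flip_bit i a" using bits_eq[OF assms(3) flip_less[OF assms(1,2)]] by blast
    then show False using assms(4) by simp
  qed
  then obtain j where "j < n" "?F j $$ (qbit a j, qbit b j) = 0" by blast
  then have "(\<Prod>j<n. ?F j $$ (qbit a j, qbit b j)) = 0"
    by (intro prod_zero) (auto intro!: bexI[of _ j] simp del: if_image_distrib)
  then show ?thesis using assms(2,3) by (simp add: stab_gen_tens del: if_image_distrib)
qed

lemma gen_entry_flip:
  assumes "simple_graph n E" "i < n" "a < 2^n"
  shows "stab_gen n E i $$ (a, flip_bit i a) = (\<Prod>j\<in>{j. j < n \<and> E i j}. zz a j)"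
proof -
  have "stab_gen n E i $$ (a, flip_bit i a) = (\<Prod>j<n. pauli_mat (if j = i then PX else if E i j then PZ else PI) $$ (qbit a j, qbit (flip_bit i a) j))"
    using assms flip_less by (simp add: stab_gen_tens)
  also have "\<dots> = (\<Prod>j<n. if E i j then zz a j else 1)"
  proof (intro prod.cong refl)
    fix j assume "j \<in> {..<n}"
    have Eii: "\<not> E i i" using assms(1) unfolding simple_graph_def by blast
    show "pauli_mat (if j = i then PX else if E i j then PZ else PI) $$ (qbit a j, qbit (flip_bit i a) j) = (if E i j then zz a j else 1)"
      using qbit_cases[of a j] Eii by (auto simp: pX pZ pI qbit_flip zz_def)
  qed
  also have "\<dots> = (\<Prod>j\<in>{j \<in> {..<n}. E i j}. zz a j)"
    by (rule prod.inter_filter[symmetric]) auto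
  also have "{j \<in> {..<n}. E i j} = {j. j < n \<and> E i j}" by auto
  finally show ?thesis .
qed


lemma zz_sq: "zz a j * zz a j = 1" by (simp add: zz_def)

lemma gen_stab:
  assumes "simple_graph n E" "i < n"
  shows "stab_gen n E i *\<^sub>v graph_state n E = graph_state n E"
proof (rule eq_vecI)
  let ?G = "graph_state n E"
  let ?Ed = "{(u,w). u < w \<and> w < n \<and> E u w}"
  let ?Z = "\<lambda>a. \<Prod>j\<in>{j. j < n \<and> E i j}. zz a j"
  have G: "?G \<in> carrier_vec (2^n)" by (rule graph_state_carrier)
  fix a assume "a < dim_vec ?G"
  then have a: "a < 2^n" using G by simp
  define fa where "fa = flip_bit i a"
  have fa: "fa < 2^n" unfolding fa_def using flip_less[OF assms(2) a] .
  have "(stab_gen n E i *\<^sub>v ?G) $ a = (\<Sum>b\<in>{0..<2^n}. stab_gen n E i $$ (a,b) * ?G $ b)"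
    using a G by (auto simp: scalar_prod_def intro!: sum.cong)
  also have "\<dots> = (\<Sum>b\<in>{0..<2^n}. if b = fa then stab_gen n E i $$ (a,fa) * ?G $ fa else 0)"
    by (intro sum.cong refl) (use gen_entry_zero[OF assms(2) a] in \<open>auto simp: fa_def\<close>)
  also have "\<dots> = stab_gen n E i $$ (a,fa) * ?G $ fa" using fa by (simp add: sum.delta)
  also have "\<dots> = ?Z a * (cst n * ((\<Prod>e\<in>?Ed. sgn2 a (fst e) (snd e)) * ?Z a))"
    unfolding fa_def using gen_entry_flip[OF assms a] graph_state_index[OF fa[unfolded fa_def]] sigma_flip[OF assms]
    by simp
  also have "\<dots> = cst n * (\<Prod>e\<in>?Ed. sgn2 a (fst e) (snd e)) * (?Z a * ?Z a)" by (simp add: mult_ac)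
  also have "?Z a * ?Z a = 1" by (simp add: prod.distrib[symmetric] zz_sq)
  also have "cst n * (\<Prod>e\<in>?Ed. sgn2 a (fst e) (snd e)) * 1 = ?G $ a" using graph_state_index[OF a] by simp
  finally show "(stab_gen n E i *\<^sub>v ?G) $ a = ?G $ a" .
qed (simp add: graph_state_carrier[THEN carrier_vecD])

lemma stabilizer_carrier: "stabilizer n E l \<in> carrier_mat (2^n) (2^n)"
proof -
  have "foldr (\<lambda>i M. (if l i then stab_gen n E i else 1\<^sub>m (2 ^ n)) * M) xs (1\<^sub>m (2 ^ n)) \<in> carrier_mat (2^n) (2^n)" for xs
    by (induction xs) auto
  then show ?thesis unfolding stabilizer_def by blast
qed

lemma stabilizer_stab:
  assumes "simple_graph n E"
  shows "stabilizer n E l *\<^sub>v graph_state n E = graph_state n E"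
proof -
  let ?f = "\<lambda>i M. (if l i then stab_gen n E i else 1\<^sub>m (2 ^ n)) * M"
  have "set xs \<subseteq> {..<n} \<Longrightarrow> foldr ?f xs (1\<^sub>m (2 ^ n)) \<in> carrier_mat (2^n) (2^n) \<and> foldr ?f xs (1\<^sub>m (2 ^ n)) *\<^sub>v graph_state n E = graph_state n E" for xs
  proof (induction xs)
    case Nil then show ?case using graph_state_carrier by simp
  next
    case (Cons x xs)
    let ?M = "foldr ?f xs (1\<^sub>m (2 ^ n))"
    have M: "?M \<in> carrier_mat (2^n) (2^n)" and MG: "?M *\<^sub>v graph_state n E = graph_state n E" using Cons by auto
    have A: "(if l x then stab_gen n E x else 1\<^sub>m (2 ^ n)) \<in> carrier_mat (2^n) (2^n)" by auto
    have "((if l x then stab_gen n E x else 1\<^sub>m (2 ^ n)) * ?M) *\<^sub>v graph_state n E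
        = (if l x then stab_gen n E x else 1\<^sub>m (2 ^ n)) *\<^sub>v (?M *\<^sub>v graph_state n E)"
      using A M graph_state_carrier by (rule assoc_mult_mat_vec)
    also have "\<dots> = graph_state n E" using MG Cons(2) gen_stab[OF assms, of x] graph_state_carrier by auto
    finally show ?case using A M by simp
  qed
  from this[of "[0..<n]"] show ?thesis unfolding stabilizer_def by (auto simp: lessThan_atLeast0)
qed


lemma sgn2_sq: "sgn2 a u w * sgn2 a u w = 1" by (simp add: sgn2_def)

lemma graph_state_norm: "a < 2^n \<Longrightarrow> cnj (graph_state n E $ a) * graph_state n E $ a = complex_of_real (1 / 2^n)"
proof -
  assume a: "a < 2^n"
  let ?s = "\<Prod>e\<in>{(u,w). u < w \<and> w < n \<and> E u w}. sgn2 a (fst e) (snd e)"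
  have c1: "cnj ?s = ?s" by (simp add: sgn2_def if_distrib cong: if_cong)
  have c2: "?s * ?s = 1" by (simp add: prod.distrib[symmetric] sgn2_sq)
  have c3: "cnj (cst n) = cst n" by (simp add: cst_def)
  have c4: "cst n * cst n = complex_of_real (1 / 2^n)"
    by (simp add: cst_def of_real_mult[symmetric] del: of_real_mult)
  show ?thesis using graph_state_index[OF a, of E] c1 c2 c3 c4
    by (simp add: mult_ac)
qed

lemma trace_density_stab:
  assumes "S \<in> carrier_mat (2^n) (2^n)" "S *\<^sub>v graph_state n E = graph_state n E"
  shows "mat_trace (graph_density n E * S) = 1"
proof -
  let ?G = "graph_state n E"
  have G: "?G \<in> carrier_vec (2^n)" by (rule graph_state_carrier)
  have rho: "graph_density n E \<in> carrier_mat (2^n) (2^n)" by (simp add: graph_density_def Let_def)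
  have "mat_trace (graph_density n E * S) = (\<Sum>a<(2::nat)^n. \<Sum>b<(2::nat)^n. ?G $ a * cnj (?G $ b) * S $$ (b,a))"
    using assms(1) rho by (auto simp: mat_trace_def scalar_prod_def graph_density_def Let_def lessThan_atLeast0 intro!: sum.cong)
  also have "\<dots> = (\<Sum>b<(2::nat)^n. cnj (?G $ b) * (\<Sum>a<(2::nat)^n. S $$ (b,a) * ?G $ a))"
    by (subst sum.swap) (simp add: sum_distrib_left mult_ac)
  also have "\<dots> = (\<Sum>b<(2::nat)^n. cnj (?G $ b) * ?G $ b)"
  proof (intro sum.cong refl)
    fix b :: nat assume b: "b \<in> {..<2^n}"
    have "(\<Sum>a<(2::nat)^n. S $$ (b,a) * ?G $ a) = (S *\<^sub>v ?G) $ b"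
      using b assms(1) G by (auto simp: scalar_prod_def lessThan_atLeast0 intro!: sum.cong)
    then show "cnj (?G $ b) * (\<Sum>a<(2::nat)^n. S $$ (b,a) * ?G $ a) = cnj (?G $ b) * ?G $ b" using assms(2) by simp
  qed
  also have "\<dots> = (\<Sum>b<(2::nat)^n. complex_of_real (1 / 2^n))" by (intro sum.cong refl) (simp add: graph_state_norm)
  also have "\<dots> = 1" by (simp add: of_real_divide)
  finally show ?thesis .
qed



lemma pow_diff_le:
  fixes x y :: real
  assumes "0 \<le> y" "y \<le> x"
  shows "x^Suc k - y^Suc k \<le> real (Suc k) * x^k * (x - y)"
proof (induction k)
  case 0 then show ?case by simp
next
  case (Suc k)
  have "x^Suc (Suc k) - y^Suc (Suc k) = x * (x^Suc k - y^Suc k) + y^Suc k * (x - y)"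
    by (simp add: algebra_simps)
  also have "\<dots> \<le> x * (real (Suc k) * x^k * (x - y)) + x^Suc k * (x - y)"
  proof (rule add_mono)
    show "x * (x^Suc k - y^Suc k) \<le> x * (real (Suc k) * x^k * (x - y))"
      using Suc assms by (intro mult_left_mono) auto
    show "y^Suc k * (x - y) \<le> x^Suc k * (x - y)"
      using assms by (intro mult_right_mono power_mono) auto
  qed
  also have "\<dots> = real (Suc (Suc k)) * x^Suc k * (x - y)" by (simp add: algebra_simps)
  finally show ?case .
qed

lemma ineq_main:
  fixes p :: real and k :: nat
  assumes k: "k \<ge> 1" and p: "0 \<le> p" "p \<le> 3/4"
  shows "0 \<le> (1 - p) ^ (4 * k) - (1 - 4 / 3 * p) ^ (3 * k)
         \<and> (1 - p) ^ (4 * k) - (1 - 4 / 3 * p) ^ (3 * k) < 2 / (3 * real k)"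
proof -
  define x where "x = (1 - p)^4"
  define y where "y = (1 - 4/3*p)^3"
  have y0: "0 \<le> y" unfolding y_def using p by simp
  have diff: "x - y = p^2 * (2/3 - 44/27 * p + p^2)"
    unfolding x_def y_def by (simp add: field_simps power2_eq_square power3_eq_cube power4_eq_xxxx)
  have q: "2/3 - 44/27 * p + p^2 > 0"
  proof -
    have "2/3 - 44/27 * p + p^2 = (p - 22/27)^2 + 2/729"
      by (simp add: power2_eq_square algebra_simps)
    moreover have "(p - 22/27)^2 \<ge> 0" by simp
    ultimately show ?thesis by linarith
  qed
  have yx: "y \<le> x" using diff q by (smt (verit) zero_le_power2 mult_nonneg_nonneg)
  have q2: "2/3 - 44/27 * p + p^2 \<le> 2/3"
  proof -
    have "p * p \<le> 1 * p" using p by (intro mult_right_mono) auto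
    then have "p^2 \<le> 44/27 * p" using p by (simp add: power2_eq_square)
    then show ?thesis by linarith
  qed
  have dxy: "x - y \<le> 2/3 * p^2"
  proof -
    have "p^2 * (2/3 - 44/27 * p + p^2) \<le> p^2 * (2/3)" by (rule mult_left_mono[OF q2]) simp
    then show ?thesis using diff by simp
  qed
  obtain m where m: "k = Suc m" using k by (cases k) auto
  have e1: "(1 - p)^4 = x" unfolding x_def ..
  have P1: "(1 - p) ^ (4 * k) = x ^ k" unfolding x_def by (simp add: power_mult)
  have P2: "(1 - 4 / 3 * p) ^ (3 * k) = y ^ k" unfolding y_def by (simp add: power_mult)
  have x0: "0 \<le> x" unfolding x_def by simp
  have xe: "x \<le> exp (-4 * p)"
  proof -
    have "1 - p \<le> exp (-p)" using exp_ge_add_one_self[of "-p"] by simp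
    then have "(1 - p)^4 \<le> exp (-p)^4" using p by (intro power_mono) auto
    also have "exp (-p)^4 = exp (-4*p)" by (simp add: exp_of_nat_mult[symmetric])
    finally show ?thesis unfolding x_def .
  qed
  have bound: "x^k - y^k \<le> real k * exp (-4*p*m) * (2/3*p^2)"
  proof -
    have "x^k - y^k \<le> real k * x^m * (x - y)" using pow_diff_le[OF y0 yx, of m] m by simp
    also have "\<dots> \<le> real k * exp (-4*p*m) * (2/3*p^2)"
    proof (intro mult_mono mult_left_mono)
      have "x^m \<le> exp (-4*p)^m" using x0 xe by (intro power_mono) auto
      also have "exp (-4*p)^m = exp (-4*p*m)" by (simp add: exp_of_nat_mult[symmetric] mult_ac)
      finally show "x^m \<le> exp (-4*p*m)" .
    qed (use dxy yx x0 in auto)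
    finally show ?thesis .
  qed
  have key: "real k * real k * p^2 * exp (-4*p*m) < 1"
  proof (cases "m = 0")
    case True
    then have "k = 1" using m by simp
    have "p * p \<le> (3/4) * (3/4)" using p by (intro mult_mono) auto
    then show ?thesis using True \<open>k = 1\<close> by (simp add: power2_eq_square)
  next
    case False
    define z where "z = 4*p*m"
    have z0: "0 \<le> z" unfolding z_def using p by simp
    have "1 + z + z^2/2 \<le> exp z" by (rule exp_lower_Taylor_quadratic[OF z0])
    then have zz: "z^2 < 2 * exp z" using z0 by linarith
    have "real k \<le> 2 * real m" using m False by simp
    then have "real k * p \<le> (2 * real m) * p" using p by (intro mult_right_mono) auto
    then have "real k * p \<le> z / 2" unfolding z_def by (simp add: mult_ac)
    then have "(real k * p)^2 \<le> (z/2)^2" using p by (intro power_mono) auto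
    then have "real k * real k * p^2 \<le> z^2 / 4" by (simp add: power2_eq_square power_divide mult_ac)
    then have "real k * real k * p^2 < exp z / 2" using zz by linarith
    then have "real k * real k * p^2 * exp (-z) < exp z / 2 * exp (-z)"
      by (intro mult_strict_right_mono) auto
    also have "exp z / 2 * exp (-z) = 1/2" by (simp add: exp_minus field_simps)
    finally show ?thesis unfolding z_def by simp
  qed
  have "x^k - y^k < 2 / (3 * real k)"
  proof -
    have kp: "real k > 0" using k by simp
    have "x^k - y^k \<le> real k * exp (-4*p*m) * (2/3*p^2)" by (rule bound)
    also have "\<dots> = (real k * real k * p^2 * exp (-4*p*m)) * (2/3) / real k" using kp by (simp add: field_simps)
    also have "\<dots> < 1 * (2/3) / real k" using key kp by (intro divide_strict_right_mono mult_strict_right_mono) auto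
    also have "\<dots> = 2 / (3 * real k)" by simp
    finally show ?thesis .
  qed
  moreover have "0 \<le> x^k - y^k" using power_mono[OF yx y0, of k] by simp
  ultimately show ?thesis unfolding P1 P2 by simp
qed


theorem theorem1:
  fixes k :: nat and E :: "nat \<Rightarrow> nat \<Rightarrow> bool"
  assumes "k \<ge> 1"
    and "simple_graph (4 * k) E"
    and "no_isolated_vertices (4 * k) E"
    and "weight_stabilizers (4 * k) E (3 * k) \<noteq> {}"
  shows "\<forall>S \<in> weight_stabilizers (4 * k) E (3 * k). \<forall>p::real. 0 \<le> p \<and> p \<le> 1 \<longrightarrow>
           mat_trace (depol_all (4 * k) p (graph_density (4 * k) E) * S)
             = complex_of_real ((1 - 4 / 3 * p) ^ (3 * k))
           \<and> (p \<le> 3 / 4 \<longrightarrow>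
                0 \<le> (1 - p) ^ (4 * k) - (1 - 4 / 3 * p) ^ (3 * k)
                \<and> (1 - p) ^ (4 * k) - (1 - 4 / 3 * p) ^ (3 * k) < 2 / (3 * real k))"
proof (intro ballI allI impI conjI)
  fix S and p :: real
  assume S: "S \<in> weight_stabilizers (4 * k) E (3 * k)" and p: "0 \<le> p \<and> p \<le> 1"
  let ?n = "4 * k"
  obtain l where Sl: "S = stabilizer ?n E l" using S unfolding weight_stabilizers_def by blast
  obtain s :: nat and tau where st: "S = ((-1) ^ s) \<cdot>\<^sub>m pauli_tensor ?n tau"
    and card: "card {i. i < ?n \<and> tau i \<noteq> PI} = 3 * k"
    using S unfolding weight_stabilizers_def by blast
  let ?T = "tens ?n (\<lambda>j. pauli_mat (tau j))"
  let ?rho = "graph_density ?n E"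
  have T: "?T \<in> carrier_mat (2^?n) (2^?n)" by simp
  have rho: "?rho \<in> carrier_mat (2^?n) (2^?n)" by (simp add: graph_density_def Let_def)
  have D: "depol_all ?n p ?rho \<in> carrier_mat (2^?n) (2^?n)"
    unfolding depol_all_def by (rule foldr_depol_carrier[OF rho])
  have S2: "S = ((-1) ^ s) \<cdot>\<^sub>m ?T" using st by (simp add: pauli_tensor_tens)
  have one: "mat_trace (?rho * S) = 1"
    using trace_density_stab[OF _ stabilizer_stab[OF assms(2)]] stabilizer_carrier Sl by simp
  have "mat_trace (?rho * S) = (-1)^s * mat_trace (?rho * ?T)"
  proof -
    have "?rho * ((-1)^s \<cdot>\<^sub>m ?T) = (-1)^s \<cdot>\<^sub>m (?rho * ?T)" by (rule mult_smult_distrib[OF rho T])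
    moreover have "?rho * ?T \<in> carrier_mat (2^?n) (2^?n)" using rho T by simp
    ultimately show ?thesis unfolding S2 by (simp add: mat_trace_smult)
  qed
  then have one': "(-1)^s * mat_trace (?rho * ?T) = 1" using one by simp
  have "mat_trace (depol_all ?n p ?rho * S) = (-1)^s * mat_trace (depol_all ?n p ?rho * ?T)"
  proof -
    have "depol_all ?n p ?rho * ((-1)^s \<cdot>\<^sub>m ?T) = (-1)^s \<cdot>\<^sub>m (depol_all ?n p ?rho * ?T)" by (rule mult_smult_distrib[OF D T])
    moreover have "depol_all ?n p ?rho * ?T \<in> carrier_mat (2^?n) (2^?n)" using D T by simp
    ultimately show ?thesis unfolding S2 by (simp add: mat_trace_smult)
  qed
  also have "\<dots> = (-1)^s * (complex_of_real ((1 - 4/3*p) ^ (3 * k)) * mat_trace (?rho * ?T))"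
    using trace_depol_all[OF rho, of p tau] card by simp
  also have "\<dots> = complex_of_real ((1 - 4/3*p) ^ (3 * k)) * ((-1)^s * mat_trace (?rho * ?T))"
    by (simp add: mult_ac)
  finally show "mat_trace (depol_all ?n p ?rho * S) = complex_of_real ((1 - 4 / 3 * p) ^ (3 * k))"
    using one' by simp
next
  fix p :: real assume "0 \<le> p \<and> p \<le> 1" "p \<le> 3/4"
  then show "0 \<le> (1 - p) ^ (4 * k) - (1 - 4 / 3 * p) ^ (3 * k)"
    using ineq_main[OF assms(1)] by blast
next
  fix p :: real assume "0 \<le> p \<and> p \<le> 1" "p \<le> 3/4"
  then show "(1 - p) ^ (4 * k) - (1 - 4 / 3 * p) ^ (3 * k) < 2 / (3 * real k)"
    using ineq_main[OF assms(1)] by blast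
qed

end
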